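(* Let $X\subseteq\mathbb{R}^n$ be nonempty, closed, convex and bounded; let $F:X\to\mathbb{R}^n$ be $L_F$-Lipschitz and monotone on $X$; let $H:X\to\mathbb{R}^n$ be $L_H$-Lipschitz and $\mu_H$-strongly monotone on $X$; assume $\mathrm{SOL}(X,F)\neq\emptyset$. Let $\gamma>0$ and let $\{\eta_k\}$ be a nonincreasing positive sequence with $\gamma^2L_F^2+\gamma\eta_k\mu_H+\gamma^2\eta_k^2L_H^2\le0.5$ for all $k\ge0$. Let $x_0,\bar y_0\in X$, $\Gamma_0=0$, $\theta_0=\frac1{1-\gamma\eta_0\mu_H}$ and for $k\ge0$: $y_{k+1}=\Pi_X[x_k-\gamma(F(x_k)+\eta_kH(x_k))]$, $x_{k+1}=\Pi_X[x_k-\gamma(F(y_{k+1})+\eta_kH(y_{k+1}))]$, $\Gamma_{k+1}=\Gamma_k+\eta_k\theta_k$, $\bar y_{k+1}=\frac{\Gamma_k\bar y_k+\eta_k\theta_ky_{k+1}}{\Gamma_{k+1}}$, $\theta_{k+1}=\frac{\theta_k}{1-\gamma\eta_{k+1}\mu_H}$. Then: (i) For all $K\ge1$, $-B_H\,\mathrm{dist}(\bar y_K,\mathrm{SOL}(X,F))\le\mathrm{Gap}(\bar y_K,\mathrm{SOL}(X,F),H)\le\gamma^{-1}D_X^2\big/\sum_{j=0}^{K-1}\eta_j\theta_j$. (ii) For all $K\ge1$, $0\le\mathrm{Gap}(\bar y_K,X,F)\le\left(\gamma^{-1}\eta_0D_X^2+C_H\sqrt2\,D_X\sum_{j=0}^{K-1}\eta_j^2\theta_j\right)\big/\sum_{j=0}^{K-1}\eta_j\theta_j$.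 (iii) If $\sum_{j=0}^\infty\eta_j\theta_j=\infty$ and $\lim_{k\to\infty}\sum_{j=0}^k\eta_j^2\theta_j\big/\sum_{j=0}^k\eta_j\theta_j=0$, then $\{\bar y_k\}$ converges to the unique solution of the bilevel VI, i.e., the unique point of $\mathrm{SOL}(\mathrm{SOL}(X,F),H)$.
   Context: $\mathrm{SOL}(Y,G)=\{x\in Y: G(x)^\top(y-x)\ge0\ \forall y\in Y\}$. $\mathrm{Gap}(x,Y,G)=\sup_{y\in Y}G(y)^\top(x-y)$. $\Pi_X$ Euclidean projection; $\mathrm{dist}(x,Y)=\|x-\Pi_Y[x]\|$. $D_X^2=\sup_{x,y\in X}\frac12\|x-y\|^2$, $B_H=\sup_{x\in\mathrm{SOL}(X,F)}\|H(x)\|$, $C_H=\sup_{x\in X}\|H(x)\|$. $H$ is $\mu_H$-strongly monotone if $(H(x)-H(y))^\top(x-y)\ge\mu_H\|x-y\|^2$, $\mu_H>0$. *)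

theory Defs
  imports "HOL-Analysis.Analysis"
begin

definition SOL :: "'a::euclidean_space set \<Rightarrow> ('a \<Rightarrow> 'a) \<Rightarrow> 'a set" where
  "SOL Y G = {x \<in> Y. \<forall>y\<in>Y. G x \<bullet> (y - x) \<ge> 0}"

definition Gap :: "'a::euclidean_space \<Rightarrow> 'a set \<Rightarrow> ('a \<Rightarrow> 'a) \<Rightarrow> real" where
  "Gap x Y G = (SUP y\<in>Y. G y \<bullet> (x - y))"

definition proj :: "'a::euclidean_space set \<Rightarrow> 'a \<Rightarrow> 'a" where
  "proj Y x = closest_point Y x"

definition distS :: "'a::euclidean_space \<Rightarrow> 'a set \<Rightarrow> real" where
  "distS x Y = norm (x - proj Y x)"

definition DX2 :: "'a::euclidean_space set \<Rightarrow> real" where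
  "DX2 X = (SUP p\<in>X \<times> X. (1/2) * (norm (fst p - snd p))\<^sup>2)"

definition BH :: "'a::euclidean_space set \<Rightarrow> ('a \<Rightarrow> 'a) \<Rightarrow> ('a \<Rightarrow> 'a) \<Rightarrow> real" where
  "BH X F H = (SUP x\<in>SOL X F. norm (H x))"

definition CH :: "'a::euclidean_space set \<Rightarrow> ('a \<Rightarrow> 'a) \<Rightarrow> real" where
  "CH X H = (SUP x\<in>X. norm (H x))"

definition monotone_op :: "'a::euclidean_space set \<Rightarrow> ('a \<Rightarrow> 'a) \<Rightarrow> bool" where
  "monotone_op X F \<longleftrightarrow> (\<forall>x\<in>X. \<forall>y\<in>X. (F x - F y) \<bullet> (x - y) \<ge> 0)"

definition strongly_monotone_op :: "real \<Rightarrow> 'a::euclidean_space set \<Rightarrow> ('a \<Rightarrow> 'a) \<Rightarrow> bool" where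
  "strongly_monotone_op \<mu> X F \<longleftrightarrow> \<mu> > 0 \<and>
     (\<forall>x\<in>X. \<forall>y\<in>X. (F x - F y) \<bullet> (x - y) \<ge> \<mu> * (norm (x - y))\<^sup>2)"

end

theory Submission
  imports Defs
begin
lemma eg_step:
  fixes x y xp z gx gy :: "'a::euclidean_space"
  assumes P1: "(x - \<gamma> *\<^sub>R gx - y) \<bullet> (xp - y) \<le> 0"
    and P2: "(x - \<gamma> *\<^sub>R gy - xp) \<bullet> (z - xp) \<le> 0"
    and Lip: "\<gamma>\<^sup>2 * (norm (gy - gx))\<^sup>2 \<le> c * (norm (x - y))\<^sup>2"
  shows "(norm (xp - z))\<^sup>2 \<le> (norm (x - z))\<^sup>2 - (1 - c) * (norm (x - y))\<^sup>2 + 2 * \<gamma> * (gy \<bullet> (z - y))"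
proof -
  define p where "p = x - y"
  define q where "q = y - xp"
  define w where "w = y - z"
  have e1: "x = y + p" "xp = y - q" "z = y - w" by (auto simp: p_def q_def w_def)
  have AM: "2 * \<gamma> * ((gy - gx) \<bullet> q) \<le> \<gamma>\<^sup>2 * (norm (gy - gx))\<^sup>2 + (norm q)\<^sup>2"
  proof -
    have "0 \<le> (norm (\<gamma> *\<^sub>R (gy - gx) - q))\<^sup>2" by simp
    also have "\<dots> = \<gamma>\<^sup>2 * (norm (gy - gx))\<^sup>2 + (norm q)\<^sup>2 - 2 * \<gamma> * ((gy - gx) \<bullet> q)"
      unfolding power2_norm_eq_inner by (simp add: inner_diff inner_commute power2_eq_square algebra_simps)
    finally show ?thesis by simp
  qed
  have P1': "- (p \<bullet> q) + \<gamma> * (gx \<bullet> q) \<le> 0"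
    using P1 unfolding e1 by (simp add: inner_diff inner_add inner_commute algebra_simps)
  have P2': "p \<bullet> q - p \<bullet> w + q \<bullet> q - q \<bullet> w - \<gamma> * (gy \<bullet> q) + \<gamma> * (gy \<bullet> w) \<le> 0"
    using P2 unfolding e1 by (simp add: inner_diff inner_add inner_commute algebra_simps)
  have G: "(norm (xp - z))\<^sup>2 = w \<bullet> w - 2 * (q \<bullet> w) + q \<bullet> q"
    unfolding e1 by (simp add: power2_norm_eq_inner inner_diff inner_add inner_commute algebra_simps)
  have G2: "(norm (x - z))\<^sup>2 = p \<bullet> p + 2 * (p \<bullet> w) + w \<bullet> w"
    unfolding e1 by (simp add: power2_norm_eq_inner inner_diff inner_add inner_commute algebra_simps)
  have G3: "(norm (x - y))\<^sup>2 = p \<bullet> p" unfolding e1 by (simp add: power2_norm_eq_inner)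
  have G4: "gy \<bullet> (z - y) = - (gy \<bullet> w)" unfolding e1 by (simp add: inner_diff)
  have G5: "(norm q)\<^sup>2 = q \<bullet> q" by (simp add: power2_norm_eq_inner)
  have G6: "(gy - gx) \<bullet> q = gy \<bullet> q - gx \<bullet> q" by (simp add: inner_diff)
  show ?thesis unfolding G G2 G3 G4
    using AM P1' P2' Lip G3 G5 G6 by (simp add: algebra_simps)
qed


lemma par_ineq:
  fixes a b c :: "'a::euclidean_space"
  shows "(norm (a - c))\<^sup>2 \<le> 2 * (norm (a - b))\<^sup>2 + 2 * (norm (c - b))\<^sup>2"
proof -
  have "0 \<le> (norm ((a - b) + (c - b)))\<^sup>2" by simp
  then show ?thesis unfolding power2_norm_eq_inner
    by (simp add: inner_diff inner_add inner_commute algebra_simps)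
qed

lemma key_step:
  fixes X :: "'a::euclidean_space set" and F H :: "'a \<Rightarrow> 'a"
  assumes cX: "closed X" "convex X"
    and F_lip: "LF-lipschitz_on X F" and F_mono: "monotone_op X F"
    and H_lip: "LH-lipschitz_on X H" and H_smono: "strongly_monotone_op \<mu> X H"
    and g: "\<gamma> > 0" and e: "\<eta> > 0"
    and step: "\<gamma>\<^sup>2 * LF\<^sup>2 + \<gamma> * \<eta> * \<mu> + \<gamma>\<^sup>2 * \<eta>\<^sup>2 * LH\<^sup>2 \<le> 0.5"
    and xk: "xk \<in> X" and z: "z \<in> X"
    and yk: "yk1 = proj X (xk - \<gamma> *\<^sub>R (F xk + \<eta> *\<^sub>R H xk))"
    and xk1: "xk1 = proj X (xk - \<gamma> *\<^sub>R (F yk1 + \<eta> *\<^sub>R H yk1))"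
  shows "(norm (xk1 - z))\<^sup>2 \<le> (1 - \<gamma> * \<eta> * \<mu>) * (norm (xk - z))\<^sup>2
           + 2 * \<gamma> * (F z \<bullet> (z - yk1)) + 2 * \<gamma> * \<eta> * (H z \<bullet> (z - yk1))"
proof -
  have Xne: "X \<noteq> {}" using xk by auto
  have yX: "yk1 \<in> X" unfolding yk proj_def by (rule closest_point_in_set[OF cX(1) Xne])
  have xX: "xk1 \<in> X" unfolding xk1 proj_def by (rule closest_point_in_set[OF cX(1) Xne])
  define gx where "gx = F xk + \<eta> *\<^sub>R H xk"
  define gy where "gy = F yk1 + \<eta> *\<^sub>R H yk1"
  have P1: "(xk - \<gamma> *\<^sub>R gx - yk1) \<bullet> (xk1 - yk1) \<le> 0"
    using closest_point_dot[OF cX(2) cX(1) xX, of "xk - \<gamma> *\<^sub>R gx"] unfolding yk proj_def gx_def by simp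
  have P2: "(xk - \<gamma> *\<^sub>R gy - xk1) \<bullet> (z - xk1) \<le> 0"
    using closest_point_dot[OF cX(2) cX(1) z, of "xk - \<gamma> *\<^sub>R gy"] unfolding xk1 proj_def gy_def by simp
  have LF0: "LF \<ge> 0" using F_lip lipschitz_on_nonneg by blast
  have LH0: "LH \<ge> 0" using H_lip lipschitz_on_nonneg by blast
  have mu: "\<mu> > 0" using H_smono unfolding strongly_monotone_op_def by auto
  have nF: "norm (F yk1 - F xk) \<le> LF * norm (xk - yk1)"
    using lipschitz_on_normD[OF F_lip yX xk] by (simp add: norm_minus_commute)
  have nH: "norm (H yk1 - H xk) \<le> LH * norm (xk - yk1)"
    using lipschitz_on_normD[OF H_lip yX xk] by (simp add: norm_minus_commute)
  have "gy - gx = (F yk1 - F xk) + \<eta> *\<^sub>R (H yk1 - H xk)"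
    unfolding gx_def gy_def by (simp add: algebra_simps)
  then have "norm (gy - gx) \<le> norm (F yk1 - F xk) + \<eta> * norm (H yk1 - H xk)"
    using e by (metis abs_of_pos norm_scaleR norm_triangle_ineq)
  also have "\<dots> \<le> LF * norm (xk - yk1) + \<eta> * (LH * norm (xk - yk1))"
    using nF nH e by (simp add: add_mono)
  finally have ng: "norm (gy - gx) \<le> LF * norm (xk - yk1) + \<eta> * (LH * norm (xk - yk1))" .
  define d where "d = norm (xk - yk1)"
  have d0: "d \<ge> 0" unfolding d_def by simp
  have "(norm (gy - gx))\<^sup>2 \<le> (LF * d + \<eta> * (LH * d))\<^sup>2"
    using ng unfolding d_def by (simp add: power_mono)
  also have "\<dots> \<le> 2 * (LF\<^sup>2 + \<eta>\<^sup>2 * LH\<^sup>2) * d\<^sup>2"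
  proof -
    have "0 \<le> (LF * d - \<eta> * (LH * d))\<^sup>2" by simp
    then show ?thesis by (simp add: power2_eq_square algebra_simps)
  qed
  finally have "\<gamma>\<^sup>2 * (norm (gy - gx))\<^sup>2 \<le> \<gamma>\<^sup>2 * (2 * (LF\<^sup>2 + \<eta>\<^sup>2 * LH\<^sup>2) * d\<^sup>2)"
    by (simp add: mult_left_mono)
  also have "\<dots> = (2 * (\<gamma>\<^sup>2 * LF\<^sup>2 + \<gamma>\<^sup>2 * \<eta>\<^sup>2 * LH\<^sup>2)) * d\<^sup>2" by (simp add: algebra_simps)
  also have "\<dots> \<le> (1 - 2 * \<gamma> * \<eta> * \<mu>) * d\<^sup>2"
    by (rule mult_right_mono) (use step in auto)
  finally have Lip: "\<gamma>\<^sup>2 * (norm (gy - gx))\<^sup>2 \<le> (1 - 2 * \<gamma> * \<eta> * \<mu>) * (norm (xk - yk1))\<^sup>2"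
    unfolding d_def .
  have E: "(norm (xk1 - z))\<^sup>2 \<le> (norm (xk - z))\<^sup>2 - (1 - (1 - 2 * \<gamma> * \<eta> * \<mu>)) * (norm (xk - yk1))\<^sup>2 + 2 * \<gamma> * (gy \<bullet> (z - yk1))"
    by (rule eg_step[OF P1 P2 Lip])
  have mF: "(F z - F yk1) \<bullet> (z - yk1) \<ge> 0" using F_mono z yX unfolding monotone_op_def by blast
  have mH: "(H z - H yk1) \<bullet> (z - yk1) \<ge> \<mu> * (norm (z - yk1))\<^sup>2"
    using H_smono z yX unfolding strongly_monotone_op_def by blast
  have gyz: "gy \<bullet> (z - yk1) \<le> F z \<bullet> (z - yk1) + \<eta> * (H z \<bullet> (z - yk1)) - \<eta> * \<mu> * (norm (z - yk1))\<^sup>2"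
  proof -
    have "gy \<bullet> (z - yk1) = F yk1 \<bullet> (z - yk1) + \<eta> * (H yk1 \<bullet> (z - yk1))"
      unfolding gy_def by (simp add: inner_add_left)
    moreover have "\<eta> * (H yk1 \<bullet> (z - yk1)) \<le> \<eta> * (H z \<bullet> (z - yk1) - \<mu> * (norm (z - yk1))\<^sup>2)"
      using mH e by (intro mult_left_mono) (auto simp: inner_diff_left)
    ultimately show ?thesis using mF by (simp add: inner_diff_left algebra_simps)
  qed
  have par: "(norm (xk - z))\<^sup>2 \<le> 2 * (norm (xk - yk1))\<^sup>2 + 2 * (norm (z - yk1))\<^sup>2" by (rule par_ineq)
  have "\<gamma> * \<eta> * \<mu> * (norm (xk - z))\<^sup>2 \<le> \<gamma> * \<eta> * \<mu> * (2 * (norm (xk - yk1))\<^sup>2 + 2 * (norm (z - yk1))\<^sup>2)"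
    using par g e mu by (intro mult_left_mono) auto
  then have P': "\<gamma> * \<eta> * \<mu> * (norm (xk - z))\<^sup>2 \<le> 2 * \<gamma> * \<eta> * \<mu> * (norm (xk - yk1))\<^sup>2 + 2 * \<gamma> * \<eta> * \<mu> * (norm (z - yk1))\<^sup>2"
    by (simp add: algebra_simps)
  have G: "2*\<gamma>*(gy \<bullet> (z-yk1)) \<le> 2*\<gamma>*(F z \<bullet> (z-yk1)) + 2*\<gamma>*\<eta>*(H z \<bullet> (z-yk1)) - 2*\<gamma>*\<eta>*\<mu>*(norm(z-yk1))\<^sup>2"
    using mult_left_mono[OF gyz, of "2*\<gamma>"] g by (simp add: algebra_simps)
  have E': "(norm (xk1 - z))\<^sup>2 \<le> (norm (xk - z))\<^sup>2 - 2 * \<gamma> * \<eta> * \<mu> * (norm (xk - yk1))\<^sup>2 + 2 * \<gamma> * (gy \<bullet> (z - yk1))"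
    using E by simp
  have R: "(1 - \<gamma> * \<eta> * \<mu>) * (norm (xk - z))\<^sup>2 = (norm (xk - z))\<^sup>2 - \<gamma> * \<eta> * \<mu> * (norm (xk - z))\<^sup>2"
    by (simp add: algebra_simps)
  show ?thesis unfolding R using E' G P' by linarith
qed


lemma le_div_helper:
  fixes a t c :: real
  assumes "0 < a" "a * t \<le> c"
  shows "t \<le> c / a"
  using assms by (simp add: pos_le_divide_eq mult.commute)

lemma telescope:
  fixes w P :: "nat \<Rightarrow> real"
  assumes "\<And>k. w k \<le> P k - P (Suc k)" "\<And>k. P k \<ge> 0"
  shows "(\<Sum>k<K. w k) \<le> P 0"
proof -
  have "(\<Sum>k<K. w k) \<le> P 0 - P K"
  proof (induction K)
    case (Suc K) then show ?case using assms(1)[of K] by simp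
  qed simp
  then show ?thesis using assms(2)[of K] by linarith
qed

lemma minty:
  fixes X :: "'a::euclidean_space set" and G :: "'a \<Rightarrow> 'a"
  assumes cX: "convex X" and cG: "continuous_on X G" and x: "x \<in> X"
    and M: "\<forall>z\<in>X. G z \<bullet> (x - z) \<le> 0"
  shows "x \<in> SOL X G"
  unfolding SOL_def
proof (intro CollectI conjI x ballI)
  fix y assume y: "y \<in> X"
  show "G x \<bullet> (y - x) \<ge> 0"
  proof (rule ccontr)
    assume "\<not> ?thesis"
    then have c: "G x \<bullet> (y - x) < 0" by simp
    define c where "c = - (G x \<bullet> (y - x))"
    have c0: "c > 0" using c unfolding c_def by simp
    define e where "e = c / (norm (y - x) + 1)"
    have e0: "e > 0" unfolding e_def using c0 by (intro divide_pos_pos) (auto intro: add_nonneg_pos)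
    obtain d where d0: "d > 0" and d: "\<And>z. z \<in> X \<Longrightarrow> dist z x < d \<Longrightarrow> dist (G z) (G x) < e"
      using cG x e0 unfolding continuous_on_iff by metis
    define t where "t = min (1/2) (d / (2 * (norm (y - x) + 1)))"
    have t0: "t > 0" unfolding t_def using d0 by (auto intro!: divide_pos_pos add_nonneg_pos)
    have t1: "t \<le> 1" unfolding t_def by simp
    define z where "z = x + t *\<^sub>R (y - x)"
    have zX: "z \<in> X" unfolding z_def using convexD_alt[OF cX x y, of t] t0 t1
      by (simp add: algebra_simps)
    have "dist z x = t * norm (y - x)" unfolding z_def dist_norm using t0 by simp
    also have "\<dots> \<le> (d / (2 * (norm (y - x) + 1))) * (norm (y - x) + 1)"
      using d0 by (intro mult_mono) (auto simp: t_def intro!: divide_nonneg_pos add_nonneg_pos)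
    also have "\<dots> = d / 2"
    proof -
      have "norm (y - x) + 1 > 0" by (simp add: add_nonneg_pos)
      then show ?thesis by (simp add: field_simps)
    qed
    also have "\<dots> < d" using d0 by simp
    finally have "dist (G z) (G x) < e" using d zX by blast
    then have nz: "norm (G z - G x) < e" by (simp add: dist_norm)
    have "G z \<bullet> (x - z) \<le> 0" using M zX by blast
    then have "- t * (G z \<bullet> (y - x)) \<le> 0" unfolding z_def by (simp add: inner_diff_right)
    then have gz: "G z \<bullet> (y - x) \<ge> 0" using t0
      by (simp add: zero_le_mult_iff)
    have "(G z - G x) \<bullet> (y - x) \<le> norm (G z - G x) * norm (y - x)"
      by (rule norm_cauchy_schwarz)
    also have "\<dots> \<le> e * norm (y - x)" using nz by (intro mult_right_mono) auto
    also have "\<dots> < c"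
    proof -
      have "e * norm (y - x) = c * (norm (y - x) / (norm (y - x) + 1))" unfolding e_def by simp
      also have "\<dots> < c * 1"
      proof -
        have "norm (y - x) + 1 > 0" by (simp add: add_nonneg_pos)
        then have "norm (y - x) / (norm (y - x) + 1) < 1" by (simp add: divide_less_eq)
        then show ?thesis using c0 by (intro mult_strict_left_mono) auto
      qed
      finally show ?thesis by simp
    qed
    finally have "G z \<bullet> (y - x) - G x \<bullet> (y - x) < c" by (simp add: inner_diff_left)
    then show False using gz unfolding c_def by simp
  qed
qed

lemma SOL_char:
  fixes X :: "'a::euclidean_space set" and F :: "'a \<Rightarrow> 'a"
  assumes cX: "convex X" and cF: "continuous_on X F" and m: "monotone_op X F"
  shows "SOL X F = X \<inter> (\<Inter>z\<in>X. {x. F z \<bullet> x \<le> F z \<bullet> z})"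
proof
  show "SOL X F \<subseteq> X \<inter> (\<Inter>z\<in>X. {x. F z \<bullet> x \<le> F z \<bullet> z})"
  proof
    fix x assume x: "x \<in> SOL X F"
    then have xX: "x \<in> X" and s: "\<forall>y\<in>X. F x \<bullet> (y - x) \<ge> 0" unfolding SOL_def by auto
    have "F z \<bullet> x \<le> F z \<bullet> z" if z: "z \<in> X" for z
    proof -
      have "(F z - F x) \<bullet> (z - x) \<ge> 0" using m z xX unfolding monotone_op_def by blast
      moreover have "F x \<bullet> (z - x) \<ge> 0" using s z by blast
      ultimately show ?thesis by (simp add: inner_diff)
    qed
    then show "x \<in> X \<inter> (\<Inter>z\<in>X. {x. F z \<bullet> x \<le> F z \<bullet> z})" using xX by auto
  qed
next
  show "X \<inter> (\<Inter>z\<in>X. {x. F z \<bullet> x \<le> F z \<bullet> z}) \<subseteq> SOL X F"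
  proof
    fix x assume "x \<in> X \<inter> (\<Inter>z\<in>X. {x. F z \<bullet> x \<le> F z \<bullet> z})"
    then have xX: "x \<in> X" and M: "\<forall>z\<in>X. F z \<bullet> (x - z) \<le> 0" by (auto simp: inner_diff_right)
    show "x \<in> SOL X F" by (rule minty[OF cX cF xX M])
  qed
qed

lemma SOL_closed_convex:
  fixes X :: "'a::euclidean_space set" and F :: "'a \<Rightarrow> 'a"
  assumes "closed X" "convex X" and cF: "continuous_on X F" and m: "monotone_op X F"
  shows "closed (SOL X F)" "convex (SOL X F)"
  unfolding SOL_char[OF assms(2-4)]
  by (auto intro!: closed_Int closed_INT convex_Int convex_INT closed_halfspace_le convex_halfspace_le assms)

lemma bdd_cont:
  fixes g :: "'a::topological_space \<Rightarrow> real"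
  assumes "compact K" "continuous_on K g"
  shows "bdd_above (g ` K)"
  using compact_continuous_image[OF assms(2,1)] by (simp add: bounded_imp_bdd_above compact_imp_bounded)


lemma subseq_conv:
  fixes f :: "nat \<Rightarrow> 'a::euclidean_space"
  assumes K: "compact K" and fK: "\<And>n. f n \<in> K"
    and U: "\<And>r t. strict_mono r \<Longrightarrow> (f \<circ> r) \<longlonglongrightarrow> t \<Longrightarrow> t = s"
  shows "f \<longlonglongrightarrow> s"
proof (rule ccontr)
  assume "\<not> f \<longlonglongrightarrow> s"
  then obtain e where e: "e > 0" and inf: "\<forall>N. \<exists>n\<ge>N. \<not> dist (f n) s < e"
    unfolding lim_sequentially by blast
  define A where "A = {n. dist (f n) s \<ge> e}"
  have iA: "infinite A" unfolding A_def infinite_nat_iff_unbounded_le using inf by (auto simp: not_less)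
  define g where "g = f \<circ> enumerate A"
  have sK: "seq_compact K" using K by (rule compact_imp_seq_compact)
  obtain l r where "l \<in> K" and r: "strict_mono r" and lim: "(g \<circ> r) \<longlonglongrightarrow> l"
    using sK fK unfolding seq_compact_def g_def by (metis comp_apply)
  have sm: "strict_mono (enumerate A \<circ> r)"
    using strict_mono_enumerate[OF iA] r by (simp add: strict_mono_def)
  have "l = s" using U[OF sm] lim unfolding g_def by (simp add: comp_assoc)
  moreover have "\<forall>n. dist ((g \<circ> r) n) s \<ge> e"
    using enumerate_in_set[OF iA] unfolding g_def A_def by auto
  ultimately show False using lim e unfolding lim_sequentially
    by (meson linorder_not_less order_refl)
qed

theorem theorem4p4:
  fixes X :: "'a::euclidean_space set"
    and F H :: "'a \<Rightarrow> 'a"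
    and LF LH \<mu>H \<gamma> :: real
    and \<eta> \<Gamma> \<theta> :: "nat \<Rightarrow> real"
    and x y ybar :: "nat \<Rightarrow> 'a"
  assumes X: "X \<noteq> {}" "closed X" "convex X" "bounded X"
    and F_lip: "LF-lipschitz_on X F" and F_mono: "monotone_op X F"
    and H_lip: "LH-lipschitz_on X H" and H_smono: "strongly_monotone_op \<mu>H X H"
    and SOL_ne: "SOL X F \<noteq> {}"
    and \<gamma>_pos: "\<gamma> > 0"
    and \<eta>_pos: "\<And>k. \<eta> k > 0"
    and \<eta>_noninc: "\<And>k. \<eta> (Suc k) \<le> \<eta> k"
    and step: "\<And>k. \<gamma>\<^sup>2 * LF\<^sup>2 + \<gamma> * \<eta> k * \<mu>H + \<gamma>\<^sup>2 * (\<eta> k)\<^sup>2 * LH\<^sup>2 \<le> 0.5"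
    and x0: "x 0 \<in> X" and ybar0: "ybar 0 \<in> X"
    and \<Gamma>0: "\<Gamma> 0 = 0"
    and \<theta>0: "\<theta> 0 = 1 / (1 - \<gamma> * \<eta> 0 * \<mu>H)"
    and y_rec: "\<And>k. y (Suc k) = proj X (x k - \<gamma> *\<^sub>R (F (x k) + \<eta> k *\<^sub>R H (x k)))"
    and x_rec: "\<And>k. x (Suc k) = proj X (x k - \<gamma> *\<^sub>R (F (y (Suc k)) + \<eta> k *\<^sub>R H (y (Suc k))))"
    and \<Gamma>_rec: "\<And>k. \<Gamma> (Suc k) = \<Gamma> k + \<eta> k * \<theta> k"
    and ybar_rec: "\<And>k. ybar (Suc k) =
          (1 / \<Gamma> (Suc k)) *\<^sub>R (\<Gamma> k *\<^sub>R ybar k + (\<eta> k * \<theta> k) *\<^sub>R y (Suc k))"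
    and \<theta>_rec: "\<And>k. \<theta> (Suc k) = \<theta> k / (1 - \<gamma> * \<eta> (Suc k) * \<mu>H)"
  shows
    "(\<forall>K\<ge>1.
        - BH X F H * distS (ybar K) (SOL X F) \<le> Gap (ybar K) (SOL X F) H \<and>
        Gap (ybar K) (SOL X F) H \<le> (DX2 X / \<gamma>) / (\<Sum>j<K. \<eta> j * \<theta> j))
   \<and> (\<forall>K\<ge>1.
        0 \<le> Gap (ybar K) X F \<and>
        Gap (ybar K) X F \<le>
          (\<eta> 0 * DX2 X / \<gamma> + CH X H * sqrt 2 * sqrt (DX2 X) * (\<Sum>j<K. (\<eta> j)\<^sup>2 * \<theta> j))
          / (\<Sum>j<K. \<eta> j * \<theta> j))
   \<and> ((filterlim (\<lambda>K. \<Sum>j<K. \<eta> j * \<theta> j) at_top sequentially \<and>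
        ((\<lambda>k. (\<Sum>j\<le>k. (\<eta> j)\<^sup>2 * \<theta> j) / (\<Sum>j\<le>k. \<eta> j * \<theta> j)) \<longlonglongrightarrow> 0))
      \<longrightarrow> (\<exists>s. SOL (SOL X F) H = {s} \<and> ybar \<longlonglongrightarrow> s))"

proof -
  have cF: "continuous_on X F" using F_lip lipschitz_on_continuous_on by blast
  have cH: "continuous_on X H" using H_lip lipschitz_on_continuous_on by blast
  have kX: "compact X" using X by (simp add: compact_eq_bounded_closed)
  define S where "S = SOL X F"
  have SX: "S \<subseteq> X" unfolding S_def SOL_def by auto
  have cS: "closed S" "convex S" unfolding S_def using SOL_closed_convex[OF X(2) X(3) cF F_mono] by auto
  have kS: "compact S" using compact_Int_closed[OF kX cS(1)] SX by (simp add: Int_absorb1)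
  have Sne: "S \<noteq> {}" using SOL_ne S_def by simp
  have cHS: "continuous_on S H" using continuous_on_subset[OF cH SX] .
  have mu: "\<mu>H > 0" using H_smono unfolding strongly_monotone_op_def by auto
  have gem: "\<gamma> * \<eta> k * \<mu>H \<le> 1/2" for k
  proof -
    have "\<gamma>\<^sup>2 * LF\<^sup>2 \<ge> 0" "\<gamma>\<^sup>2 * (\<eta> k)\<^sup>2 * LH\<^sup>2 \<ge> 0" by auto
    then show ?thesis using step[of k] by linarith
  qed
  have gem0: "\<gamma> * \<eta> k * \<mu>H > 0" for k using \<gamma>_pos \<eta>_pos[of k] mu by simp
  have den: "1 - \<gamma> * \<eta> k * \<mu>H > 0" for k using gem[of k] by linarith
  have th_pos: "\<theta> k > 0" for k
  proof (induction k)
    case 0 then show ?case using \<theta>0 den[of 0] by simp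
  next
    case (Suc k) then show ?case using \<theta>_rec[of k] den[of "Suc k"] by simp
  qed
  have et_pos: "\<eta> k * \<theta> k > 0" for k using \<eta>_pos[of k] th_pos[of k] by simp
  define \<phi> where "\<phi> k = (if k = 0 then 1 else \<theta> (k - 1))" for k
  have phi: "\<theta> k * (1 - \<gamma> * \<eta> k * \<mu>H) = \<phi> k" for k
  proof (cases k)
    case 0 then show ?thesis using \<theta>0 den[of 0] unfolding \<phi>_def by simp
  next
    case (Suc j) then show ?thesis using \<theta>_rec[of j] den[of k] unfolding \<phi>_def by simp
  qed
  have phiS: "\<phi> (Suc k) = \<theta> k" for k unfolding \<phi>_def by simp
  have phi0: "\<phi> 0 = 1" unfolding \<phi>_def by simp
  have phi_pos: "\<phi> k > 0" for k unfolding \<phi>_def using th_pos by simp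
  have \<Gamma>_sum: "\<Gamma> K = (\<Sum>j<K. \<eta> j * \<theta> j)" for K
    by (induction K) (auto simp: \<Gamma>0 \<Gamma>_rec)
  have \<Gamma>_nn: "\<Gamma> K \<ge> 0" for K unfolding \<Gamma>_sum
    using \<eta>_pos th_pos by (intro sum_nonneg) (simp add: less_imp_le)
  have \<Gamma>_pos: "\<Gamma> K > 0" if "K \<ge> 1" for K
  proof -
    have "\<Gamma> K = (\<Sum>j<K. \<eta> j * \<theta> j)" by (rule \<Gamma>_sum)
    also have "\<dots> > 0" using that \<eta>_pos th_pos by (intro sum_pos) (auto simp: lessThan_empty_iff)
    finally show ?thesis .
  qed
  have xX: "x k \<in> X" for k
    by (cases k) (auto simp: x0 x_rec proj_def intro!: closest_point_in_set X)
  have yX: "y (Suc k) \<in> X" for k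
    by (auto simp: y_rec proj_def intro!: closest_point_in_set X)
  have ybX: "ybar k \<in> X" for k
  proof (induction k)
    case 0 then show ?case using ybar0 .
  next
    case (Suc k)
    have Gs: "\<Gamma> (Suc k) > 0" using \<Gamma>_pos[of "Suc k"] by simp
    have e: "ybar (Suc k) = (\<Gamma> k / \<Gamma> (Suc k)) *\<^sub>R ybar k + ((\<eta> k * \<theta> k) / \<Gamma> (Suc k)) *\<^sub>R y (Suc k)"
      unfolding ybar_rec by (simp add: scaleR_add_right)
    have s1: "\<Gamma> k / \<Gamma> (Suc k) + (\<eta> k * \<theta> k) / \<Gamma> (Suc k) = 1"
      unfolding add_divide_distrib[symmetric] using Gs \<Gamma>_rec[of k] by simp
    show ?case unfolding e
      by (rule convexD[OF X(3) Suc yX]) (use \<Gamma>_nn Gs et_pos[of k] s1 in \<open>auto intro!: divide_nonneg_pos\<close>)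
  qed
  have ybar_sum: "\<Gamma> K *\<^sub>R ybar K = (\<Sum>j<K. (\<eta> j * \<theta> j) *\<^sub>R y (Suc j))" for K
  proof (induction K)
    case 0 then show ?case using \<Gamma>0 by simp
  next
    case (Suc K)
    have Gs: "\<Gamma> (Suc K) \<noteq> 0" using \<Gamma>_pos[of "Suc K"] by simp
    have "\<Gamma> (Suc K) *\<^sub>R ybar (Suc K) = \<Gamma> K *\<^sub>R ybar K + (\<eta> K * \<theta> K) *\<^sub>R y (Suc K)"
      unfolding ybar_rec using Gs by simp
    then show ?case using Suc by simp
  qed
  have avg: "\<Gamma> K * (v \<bullet> (ybar K - z)) = (\<Sum>j<K. \<eta> j * \<theta> j * (v \<bullet> (y (Suc j) - z)))" for K v z
  proof -
    have "\<Gamma> K * (v \<bullet> (ybar K - z)) = v \<bullet> (\<Gamma> K *\<^sub>R ybar K) - \<Gamma> K * (v \<bullet> z)"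
      by (simp add: inner_diff_right algebra_simps)
    also have "\<dots> = (\<Sum>j<K. \<eta> j * \<theta> j * (v \<bullet> y (Suc j))) - (\<Sum>j<K. \<eta> j * \<theta> j * (v \<bullet> z))"
      unfolding ybar_sum by (simp add: inner_sum_right sum_distrib_right \<Gamma>_sum)
    also have "\<dots> = (\<Sum>j<K. \<eta> j * \<theta> j * (v \<bullet> (y (Suc j) - z)))"
      by (simp add: sum_subtractf[symmetric] inner_diff_right algebra_simps)
    finally show ?thesis .
  qed
  have KS: "(norm (x (Suc k) - z))\<^sup>2 \<le> (1 - \<gamma> * \<eta> k * \<mu>H) * (norm (x k - z))\<^sup>2
           + 2 * \<gamma> * (F z \<bullet> (z - y (Suc k))) + 2 * \<gamma> * \<eta> k * (H z \<bullet> (z - y (Suc k)))"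
    if z: "z \<in> X" for k z
    by (rule key_step[OF X(2) X(3) F_lip F_mono H_lip H_smono \<gamma>_pos \<eta>_pos step xX z y_rec x_rec])
  have bddD: "bdd_above ((\<lambda>p. (1/2) * (norm (fst p - snd p))\<^sup>2) ` (X \<times> X))"
    by (rule bdd_cont) (auto intro!: compact_Times kX continuous_intros)
  have Dle: "(norm (a - b))\<^sup>2 \<le> 2 * DX2 X" if "a \<in> X" "b \<in> X" for a b
  proof -
    have "(1/2) * (norm (fst (a,b) - snd (a,b)))\<^sup>2 \<le> DX2 X"
      unfolding DX2_def by (rule cSUP_upper[OF _ bddD]) (use that in auto)
    then show ?thesis by simp
  qed
  have D0: "DX2 X \<ge> 0" using Dle[OF x0 x0] by simp
  have Dn: "norm (a - b) \<le> sqrt 2 * sqrt (DX2 X)" if "a \<in> X" "b \<in> X" for a b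
    using real_le_rsqrt[OF Dle[OF that]] by (simp add: real_sqrt_mult)
  have CHle: "norm (H z) \<le> CH X H" if "z \<in> X" for z
    unfolding CH_def by (rule cSUP_upper[OF that bdd_cont[OF kX]]) (auto intro!: continuous_intros cH)
  have BHle: "norm (H z) \<le> BH X F H" if "z \<in> S" for z
    unfolding BH_def S_def[symmetric] by (rule cSUP_upper[OF that bdd_cont[OF kS]]) (auto intro!: continuous_intros cHS)
  have sumI: "(\<Sum>j<K. \<eta> j * \<theta> j * (H z \<bullet> (y (Suc j) - z))) \<le> DX2 X / \<gamma>" if z: "z \<in> S" for K z
  proof -
    have zX: "z \<in> X" using z SX by auto
    define a where "a k = (norm (x k - z))\<^sup>2" for k
    have "(\<Sum>j<K. 2 * \<gamma> * (\<eta> j * \<theta> j * (H z \<bullet> (y (Suc j) - z)))) \<le> \<phi> 0 * a 0"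
    proof (rule telescope)
      fix k
      have Fz: "2 * \<gamma> * (F z \<bullet> (z - y (Suc k))) \<le> 0"
      proof -
        have "F z \<bullet> (y (Suc k) - z) \<ge> 0" using z yX[of k] unfolding S_def SOL_def by auto
        then have "F z \<bullet> (z - y (Suc k)) \<le> 0" by (simp add: inner_diff_right)
        then show ?thesis using \<gamma>_pos by (simp add: mult_nonneg_nonpos)
      qed
      have Hz: "2 * \<gamma> * \<eta> k * (H z \<bullet> (z - y (Suc k))) = - (2 * \<gamma> * \<eta> k * (H z \<bullet> (y (Suc k) - z)))"
        by (simp add: inner_diff_right algebra_simps)
      have "a (Suc k) \<le> (1 - \<gamma> * \<eta> k * \<mu>H) * a k - 2 * \<gamma> * \<eta> k * (H z \<bullet> (y (Suc k) - z))"
        using KS[OF zX, of k] Fz Hz unfolding a_def by linarith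
      then have "\<theta> k * a (Suc k) \<le> \<theta> k * ((1 - \<gamma> * \<eta> k * \<mu>H) * a k - 2 * \<gamma> * \<eta> k * (H z \<bullet> (y (Suc k) - z)))"
        using th_pos[of k] by (intro mult_left_mono) auto
      also have "\<dots> = \<phi> k * a k - 2 * \<gamma> * (\<eta> k * \<theta> k * (H z \<bullet> (y (Suc k) - z)))"
        unfolding phi[of k, symmetric] by (simp add: algebra_simps)
      finally show "2 * \<gamma> * (\<eta> k * \<theta> k * (H z \<bullet> (y (Suc k) - z))) \<le> \<phi> k * a k - \<phi> (Suc k) * a (Suc k)"
        unfolding phiS by linarith
    next
      fix k show "\<phi> k * a k \<ge> 0" using phi_pos[of k] unfolding a_def by simp
    qed
    also have "\<dots> \<le> 2 * DX2 X" using phi0 Dle[OF x0 zX] unfolding a_def by simp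
    finally have "\<gamma> * (\<Sum>j<K. \<eta> j * \<theta> j * (H z \<bullet> (y (Suc j) - z))) \<le> DX2 X"
      by (simp add: sum_distrib_left[symmetric] mult.assoc)
    then show ?thesis using \<gamma>_pos by (simp add: pos_le_divide_eq mult.commute)
  qed
  define C where "C = CH X H * sqrt 2 * sqrt (DX2 X)"
  have sumII: "(\<Sum>j<K. \<eta> j * \<theta> j * (F z \<bullet> (y (Suc j) - z))) \<le> \<eta> 0 * DX2 X / \<gamma> + C * (\<Sum>j<K. (\<eta> j)\<^sup>2 * \<theta> j)"
    if zX: "z \<in> X" for K z
  proof -
    define a where "a k = (norm (x k - z))\<^sup>2" for k
    have a0: "a k \<ge> 0" for k unfolding a_def by simp
    have HC: "H z \<bullet> (z - y (Suc k)) \<le> C" for k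
    proof -
      have "H z \<bullet> (z - y (Suc k)) \<le> norm (H z) * norm (z - y (Suc k))" by (rule norm_cauchy_schwarz)
      also have "\<dots> \<le> CH X H * (sqrt 2 * sqrt (DX2 X))"
        using CHle[OF zX] norm_ge_zero[of "H z"] by (intro mult_mono CHle zX Dn yX) (linarith, simp)
      finally show ?thesis unfolding C_def by (simp add: mult.assoc)
    qed
    have "(\<Sum>k<K. 2 * \<gamma> * (\<eta> k * \<theta> k * (F z \<bullet> (y (Suc k) - z))) - 2 * \<gamma> * ((\<eta> k)\<^sup>2 * \<theta> k) * C) \<le> \<eta> 0 * \<phi> 0 * a 0"
    proof (rule telescope)
      fix k
      have Fz: "2 * \<gamma> * (F z \<bullet> (z - y (Suc k))) = - (2 * \<gamma> * (F z \<bullet> (y (Suc k) - z)))"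
        by (simp add: inner_diff_right algebra_simps)
      have Hz: "2 * \<gamma> * \<eta> k * (H z \<bullet> (z - y (Suc k))) \<le> 2 * \<gamma> * \<eta> k * C"
        using HC[of k] \<gamma>_pos \<eta>_pos[of k] by (intro mult_left_mono) auto
      have "a (Suc k) \<le> (1 - \<gamma> * \<eta> k * \<mu>H) * a k - 2 * \<gamma> * (F z \<bullet> (y (Suc k) - z)) + 2 * \<gamma> * \<eta> k * C"
        using KS[OF zX, of k] Fz Hz unfolding a_def by linarith
      then have "\<eta> k * \<theta> k * a (Suc k) \<le> \<eta> k * \<theta> k * ((1 - \<gamma> * \<eta> k * \<mu>H) * a k - 2 * \<gamma> * (F z \<bullet> (y (Suc k) - z)) + 2 * \<gamma> * \<eta> k * C)"
        using et_pos[of k] by (intro mult_left_mono) auto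
      also have "\<dots> = \<eta> k * \<phi> k * a k - (2 * \<gamma> * (\<eta> k * \<theta> k * (F z \<bullet> (y (Suc k) - z))) - 2 * \<gamma> * ((\<eta> k)\<^sup>2 * \<theta> k) * C)"
        unfolding phi[of k, symmetric] by (simp add: algebra_simps power2_eq_square)
      finally have 1: "\<eta> k * \<theta> k * a (Suc k) \<le> \<eta> k * \<phi> k * a k - (2 * \<gamma> * (\<eta> k * \<theta> k * (F z \<bullet> (y (Suc k) - z))) - 2 * \<gamma> * ((\<eta> k)\<^sup>2 * \<theta> k) * C)" .
      have 2: "\<eta> (Suc k) * \<phi> (Suc k) * a (Suc k) \<le> \<eta> k * \<theta> k * a (Suc k)"
        unfolding phiS using \<eta>_noninc[of k] th_pos[of k] a0[of "Suc k"]
        by (intro mult_right_mono) auto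
      show "2 * \<gamma> * (\<eta> k * \<theta> k * (F z \<bullet> (y (Suc k) - z))) - 2 * \<gamma> * ((\<eta> k)\<^sup>2 * \<theta> k) * C
            \<le> \<eta> k * \<phi> k * a k - \<eta> (Suc k) * \<phi> (Suc k) * a (Suc k)"
        using 1 2 by linarith
    next
      fix k show "\<eta> k * \<phi> k * a k \<ge> 0" using phi_pos[of k] \<eta>_pos[of k] a0[of k] by simp
    qed
    also have "\<dots> \<le> \<eta> 0 * (2 * DX2 X)" using phi0 Dle[OF x0 zX] \<eta>_pos[of 0] unfolding a_def by simp
    finally have h0: "(\<Sum>k<K. 2 * \<gamma> * (\<eta> k * \<theta> k * (F z \<bullet> (y (Suc k) - z))) - 2 * \<gamma> * ((\<eta> k)\<^sup>2 * \<theta> k) * C) \<le> \<eta> 0 * (2 * DX2 X)" .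
    have eq: "(\<Sum>k<K. 2 * \<gamma> * (\<eta> k * \<theta> k * (F z \<bullet> (y (Suc k) - z))) - 2 * \<gamma> * ((\<eta> k)\<^sup>2 * \<theta> k) * C)
        = 2 * \<gamma> * ((\<Sum>k<K. \<eta> k * \<theta> k * (F z \<bullet> (y (Suc k) - z))) - C * (\<Sum>k<K. (\<eta> k)\<^sup>2 * \<theta> k))"
      by (simp add: sum_subtractf right_diff_distrib sum_distrib_left sum_distrib_right mult_ac)
    have h: "2 * \<gamma> * ((\<Sum>k<K. \<eta> k * \<theta> k * (F z \<bullet> (y (Suc k) - z))) - C * (\<Sum>k<K. (\<eta> k)\<^sup>2 * \<theta> k)) \<le> 2 * (\<eta> 0 * DX2 X)"
      using h0 unfolding eq by simp
    then have "((\<Sum>k<K. \<eta> k * \<theta> k * (F z \<bullet> (y (Suc k) - z))) - C * (\<Sum>k<K. (\<eta> k)\<^sup>2 * \<theta> k)) * \<gamma> \<le> \<eta> 0 * DX2 X"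
      by (simp add: mult.commute mult.left_commute)
    then have "(\<Sum>k<K. \<eta> k * \<theta> k * (F z \<bullet> (y (Suc k) - z))) - C * (\<Sum>k<K. (\<eta> k)\<^sup>2 * \<theta> k) \<le> \<eta> 0 * DX2 X / \<gamma>"
      using \<gamma>_pos by (simp add: pos_le_divide_eq)
    then show ?thesis by linarith
  qed
  define b1 where "b1 K = (DX2 X / \<gamma>) / (\<Sum>j<K. \<eta> j * \<theta> j)" for K
  define b2 where "b2 K = (\<eta> 0 * DX2 X / \<gamma> + C * (\<Sum>j<K. (\<eta> j)\<^sup>2 * \<theta> j)) / (\<Sum>j<K. \<eta> j * \<theta> j)" for K
  have boundH: "H z \<bullet> (ybar K - z) \<le> b1 K" if z: "z \<in> S" and K: "K \<ge> 1" for z K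
  proof -
    have "\<Gamma> K * (H z \<bullet> (ybar K - z)) \<le> DX2 X / \<gamma>" using avg sumI[OF z] by simp
    then show ?thesis unfolding b1_def \<Gamma>_sum[symmetric] by (rule le_div_helper[OF \<Gamma>_pos[OF K]])
  qed
  have boundF: "F z \<bullet> (ybar K - z) \<le> b2 K" if z: "z \<in> X" and K: "K \<ge> 1" for z K
  proof -
    have "\<Gamma> K * (F z \<bullet> (ybar K - z)) \<le> \<eta> 0 * DX2 X / \<gamma> + C * (\<Sum>j<K. (\<eta> j)\<^sup>2 * \<theta> j)" using avg sumII[OF z] by simp
    then show ?thesis unfolding b2_def \<Gamma>_sum[symmetric] by (rule le_div_helper[OF \<Gamma>_pos[OF K]])
  qed
  have P1: "- BH X F H * distS (ybar K) S \<le> Gap (ybar K) S H \<and> Gap (ybar K) S H \<le> b1 K" if K: "K \<ge> 1" for K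
  proof
    define p where "p = proj S (ybar K)"
    have pS: "p \<in> S" unfolding p_def proj_def by (rule closest_point_in_set[OF cS(1) Sne])
    have bdd: "bdd_above ((\<lambda>z. H z \<bullet> (ybar K - z)) ` S)"
      by (rule bdd_cont[OF kS]) (auto intro!: continuous_intros cHS)
    have "H p \<bullet> (ybar K - p) \<le> Gap (ybar K) S H" unfolding Gap_def by (rule cSUP_upper[OF pS bdd])
    moreover have "- (norm (H p) * norm (ybar K - p)) \<le> H p \<bullet> (ybar K - p)"
      using Cauchy_Schwarz_ineq2[of "H p" "ybar K - p"] by linarith
    moreover have "norm (H p) * norm (ybar K - p) \<le> BH X F H * norm (ybar K - p)"
      using BHle[OF pS] by (intro mult_right_mono) auto
    ultimately show "- BH X F H * distS (ybar K) S \<le> Gap (ybar K) S H" unfolding distS_def p_def by linarith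
  next
    show "Gap (ybar K) S H \<le> b1 K" unfolding Gap_def
      by (rule cSUP_least[OF Sne]) (use boundH K in auto)
  qed
  have Xne: "X \<noteq> {}" using x0 by auto
  have P2: "0 \<le> Gap (ybar K) X F \<and> Gap (ybar K) X F \<le> b2 K" if K: "K \<ge> 1" for K
  proof
    have bdd: "bdd_above ((\<lambda>z. F z \<bullet> (ybar K - z)) ` X)"
      by (rule bdd_cont[OF kX]) (auto intro!: continuous_intros cF)
    have "F (ybar K) \<bullet> (ybar K - ybar K) \<le> Gap (ybar K) X F" unfolding Gap_def by (rule cSUP_upper[OF ybX bdd])
    then show "0 \<le> Gap (ybar K) X F" by simp
  next
    show "Gap (ybar K) X F \<le> b2 K" unfolding Gap_def
      by (rule cSUP_least[OF Xne]) (use boundF K in auto)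
  qed
  have P3: "(\<exists>s. SOL S H = {s} \<and> ybar \<longlonglongrightarrow> s)"
    if inf: "filterlim (\<lambda>K. \<Sum>j<K. \<eta> j * \<theta> j) at_top sequentially"
    and rat: "(\<lambda>k. (\<Sum>j\<le>k. (\<eta> j)\<^sup>2 * \<theta> j) / (\<Sum>j\<le>k. \<eta> j * \<theta> j)) \<longlonglongrightarrow> 0"
  proof -
    have inv0: "(\<lambda>K. inverse (\<Sum>j<K. \<eta> j * \<theta> j)) \<longlonglongrightarrow> 0" using tendsto_inverse_0_at_top[OF inf] .
    have b1: "b1 \<longlonglongrightarrow> 0"
      using tendsto_mult[OF tendsto_const inv0, of "DX2 X / \<gamma>"] unfolding b1_def divide_inverse by simp
    have r2: "(\<lambda>K. (\<Sum>j<K. (\<eta> j)\<^sup>2 * \<theta> j) / (\<Sum>j<K. \<eta> j * \<theta> j)) \<longlonglongrightarrow> 0"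
    proof -
      have "(\<lambda>k. (\<lambda>K. (\<Sum>j<K. (\<eta> j)\<^sup>2 * \<theta> j) / (\<Sum>j<K. \<eta> j * \<theta> j)) (Suc k)) \<longlonglongrightarrow> 0"
        using rat by (simp add: lessThan_Suc_atMost)
      then show ?thesis by (rule filterlim_sequentially_Suc[THEN iffD1])
    qed
    have b2e: "b2 = (\<lambda>K. (\<eta> 0 * DX2 X / \<gamma>) * inverse (\<Sum>j<K. \<eta> j * \<theta> j) + C * ((\<Sum>j<K. (\<eta> j)\<^sup>2 * \<theta> j) / (\<Sum>j<K. \<eta> j * \<theta> j)))"
      unfolding b2_def by (rule ext) (simp add: divide_inverse algebra_simps)
    have b2: "b2 \<longlonglongrightarrow> 0"
    proof -
      have th: "(\<lambda>K. (\<eta> 0 * DX2 X / \<gamma>) * inverse (\<Sum>j<K. \<eta> j * \<theta> j) + C * ((\<Sum>j<K. (\<eta> j)\<^sup>2 * \<theta> j) / (\<Sum>j<K. \<eta> j * \<theta> j)))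
         \<longlonglongrightarrow> (\<eta> 0 * DX2 X / \<gamma>) * 0 + C * 0"
        by (rule tendsto_add[OF tendsto_mult[OF tendsto_const inv0] tendsto_mult[OF tendsto_const r2]])
      then show ?thesis unfolding b2e by simp
    qed
    have ev: "\<exists>N. \<forall>n\<ge>N. 1 \<le> r n" if "strict_mono r" for r :: "nat \<Rightarrow> nat"
      using seq_suble[OF that] by (metis order_trans)
    have LP: "t \<in> SOL S H" if r: "strict_mono r" and lim: "(ybar \<circ> r) \<longlonglongrightarrow> t" for r t
    proof -
      have tX: "t \<in> X" using closed_sequentially[OF X(2) _ lim] ybX by simp
      have "\<forall>z\<in>X. F z \<bullet> (t - z) \<le> 0"
      proof
        fix z assume z: "z \<in> X"
        have l1: "(\<lambda>n. F z \<bullet> ((ybar \<circ> r) n - z)) \<longlonglongrightarrow> F z \<bullet> (t - z)" by (intro tendsto_intros lim)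
        have l2: "(b2 \<circ> r) \<longlonglongrightarrow> 0" by (rule LIMSEQ_subseq_LIMSEQ[OF b2 r])
        obtain N where N: "\<forall>n\<ge>N. 1 \<le> r n" using ev[OF r] by blast
        show "F z \<bullet> (t - z) \<le> 0"
          by (rule LIMSEQ_le[OF l1 l2]) (use N boundF z in auto)
      qed
      then have tS: "t \<in> S" unfolding S_def by (rule minty[OF X(3) cF tX])
      have "\<forall>z\<in>S. H z \<bullet> (t - z) \<le> 0"
      proof
        fix z assume z: "z \<in> S"
        have l1: "(\<lambda>n. H z \<bullet> ((ybar \<circ> r) n - z)) \<longlonglongrightarrow> H z \<bullet> (t - z)" by (intro tendsto_intros lim)
        have l2: "(b1 \<circ> r) \<longlonglongrightarrow> 0" by (rule LIMSEQ_subseq_LIMSEQ[OF b1 r])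
        obtain N where N: "\<forall>n\<ge>N. 1 \<le> r n" using ev[OF r] by blast
        show "H z \<bullet> (t - z) \<le> 0"
          by (rule LIMSEQ_le[OF l1 l2]) (use N boundH z in auto)
      qed
      then show "t \<in> SOL S H" by (rule minty[OF cS(2) cHS tS])
    qed
    obtain s r where "s \<in> X" "strict_mono r" "(ybar \<circ> r) \<longlonglongrightarrow> s"
      using compact_imp_seq_compact[OF kX] ybX unfolding seq_compact_def by metis
    then have sSol: "s \<in> SOL S H" using LP by blast
    have uniq: "t = s" if "t \<in> SOL S H" for t
    proof -
      have tS: "t \<in> S" and sS: "s \<in> S" and h1: "H t \<bullet> (s - t) \<ge> 0" and h2: "H s \<bullet> (t - s) \<ge> 0"
        using that sSol unfolding SOL_def by auto
      have "(H t - H s) \<bullet> (t - s) \<ge> \<mu>H * (norm (t - s))\<^sup>2"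
        using H_smono SX tS sS unfolding strongly_monotone_op_def by blast
      moreover have "(H t - H s) \<bullet> (t - s) = - (H t \<bullet> (s - t)) - H s \<bullet> (t - s)"
        by (simp add: inner_diff_left inner_diff_right algebra_simps)
      ultimately have "\<mu>H * (norm (t - s))\<^sup>2 \<le> 0" using h1 h2 by linarith
      then show "t = s" using mu by (simp add: mult_le_0_iff)
    qed
    have "SOL S H = {s}" using sSol uniq by blast
    moreover have "ybar \<longlonglongrightarrow> s" by (rule subseq_conv[OF kX ybX]) (use LP uniq in blast)
    ultimately show ?thesis by blast
  qed
  show ?thesis
    using P1 P2 P3 unfolding S_def b1_def b2_def C_def by blast
qed

end
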